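(* Let $G$ be a connected graph with $n\geq 2$ vertices and $m$ edges. Then for every integer $k\geq 0$, $$R^+(S^k(G))=4^kR^+(G)+(8^k-4^k)R^*(G)+\frac{8^k-2^k}{3}m(2m-2n+1)-\frac{4^k-1}{3}(m-n)(m-n+1).$$
   Context: All graphs are finite, undirected, without loops or multiple edges. For a connected graph $H$ and vertices $i,j$, the resistance distance $\Omega_{ij}$ is the effective resistance between $i$ and $j$ in the electrical network obtained from $H$ by replacing each edge by a unit resistor. With $d_i$ the degree of vertex $i$ in $H$ and sums over unordered pairs of distinct vertices of $H$: $R^+(H)=\sum_{\{i,j\}\subseteq V(H)}(d_i+d_j)\Omega_{ij}$ (additive degree-Kirchhoff index) and $R^*(H)=\sum_{\{i,j\}\subseteq V(H)}d_id_j\Omega_{ij}$ (multiplicative degree-Kirchhoff index), with degrees and resistances taken in $H$. The subdivision $S(H)$ is the graph obtained from $H$ by replacing every edge with a path of length two. Iterated subdivisions: $S^0(G)=G$ and $S^k(G)=S(S^{k-1}(G))$ for $k\geq1$. *)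

theory Defs
  imports Complex_Main "HOL-Library.FSet"
begin

type_synonym 'a graph = "'a set \<times> 'a set set"

definition verts :: "'a graph \<Rightarrow> 'a set" where "verts H = fst H"
definition edges :: "'a graph \<Rightarrow> 'a set set" where "edges H = snd H"

definition simple_graph :: "'a graph \<Rightarrow> bool" where
  "simple_graph H \<longleftrightarrow> finite (verts H) \<and>
     (\<forall>e\<in>edges H. e \<subseteq> verts H \<and> card e = 2)"

definition adj :: "'a graph \<Rightarrow> 'a \<Rightarrow> 'a \<Rightarrow> bool" where
  "adj H u v \<longleftrightarrow> {u, v} \<in> edges H"

definition connected_graph :: "'a graph \<Rightarrow> bool" where
  "connected_graph H \<longleftrightarrow> simple_graph H \<and>
     (\<forall>u\<in>verts H. \<forall>v\<in>verts H. (adj H)\<^sup>*\<^sup>* u v)"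

definition degree :: "'a graph \<Rightarrow> 'a \<Rightarrow> nat" where
  "degree H v = card {u. adj H v u}"

text \<open>Resistance distance: inject a unit current at i and extract it at j; the
  potentials x satisfy Kirchhoff's law (unit resistors) at every vertex, and the
  effective resistance is the potential difference x i - x j.\<close>

definition resistance :: "'a graph \<Rightarrow> 'a \<Rightarrow> 'a \<Rightarrow> real" where
  "resistance H i j = (THE r. \<exists>x :: 'a \<Rightarrow> real.
      (\<forall>v\<in>verts H. (\<Sum>u\<in>{u. adj H v u}. x v - x u)
                      = (if v = i then 1 else 0) - (if v = j then 1 else 0))
      \<and> r = x i - x j)"

text \<open>Sums over unordered pairs of distinct vertices, written as half of the sum
  over ordered pairs of distinct vertices.\<close>

definition Rplus :: "'a graph \<Rightarrow> real" where
  "Rplus H = (\<Sum>i\<in>verts H. \<Sum>j\<in>verts H.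
      if i = j then 0 else real (degree H i + degree H j) * resistance H i j) / 2"

definition Rstar :: "'a graph \<Rightarrow> real" where
  "Rstar H = (\<Sum>i\<in>verts H. \<Sum>j\<in>verts H.
      if i = j then 0 else real (degree H i * degree H j) * resistance H i j) / 2"

text \<open>Vertex type closed under subdivision: original vertices, and a new vertex
  for every (subdivided) edge, named by that edge.\<close>

datatype 'a svert = Orig 'a | Mid "'a svert fset"

definition lift_graph :: "'a graph \<Rightarrow> 'a svert graph" where
  "lift_graph H = (Orig ` verts H, (\<lambda>e. Orig ` e) ` edges H)"

definition subdivision :: "'a svert graph \<Rightarrow> 'a svert graph" where
  "subdivision H = (verts H \<union> (\<lambda>e. Mid (Abs_fset e)) ` edges H,
     {{u, Mid (Abs_fset e)} | u e. e \<in> edges H \<and> u \<in> e})"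

definition iter_subdivision :: "nat \<Rightarrow> 'a graph \<Rightarrow> 'a svert graph" where
  "iter_subdivision k G = (subdivision ^^ k) (lift_graph G)"

end

theory Submission
  imports Defs "HOL-Library.Function_Algebras"
begin



definition nbr :: "'a graph \<Rightarrow> 'a \<Rightarrow> 'a set" where "nbr H v = {u. adj H v u}"
definition lap :: "'a graph \<Rightarrow> ('a \<Rightarrow> real) \<Rightarrow> 'a \<Rightarrow> real" where
  "lap H x v = (\<Sum>u\<in>nbr H v. x v - x u)"
definition sol :: "'a graph \<Rightarrow> 'a \<Rightarrow> 'a \<Rightarrow> ('a \<Rightarrow> real) \<Rightarrow> bool" where
  "sol H i j x \<longleftrightarrow> (\<forall>v\<in>verts H. lap H x v = (if v = i then 1 else 0) - (if v = j then 1 else 0))"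
definition rigid :: "'a graph \<Rightarrow> bool" where
  "rigid H \<longleftrightarrow> (\<forall>x. (\<forall>v\<in>verts H. lap H x v = 0) \<longrightarrow> (\<forall>u\<in>verts H. \<forall>v\<in>verts H. x u = x v))"
definition solvable :: "'a graph \<Rightarrow> bool" where
  "solvable H \<longleftrightarrow> (\<forall>i\<in>verts H. \<forall>j\<in>verts H. \<exists>x. sol H i j x)"

lemma resistance_alt: "resistance H i j = (THE r. \<exists>x. sol H i j x \<and> r = x i - x j)"
  unfolding resistance_def sol_def lap_def nbr_def ..

lemma adj_sym: "adj H u v \<Longrightarrow> adj H v u" by (simp add: adj_def insert_commute)
lemma adj_verts: "simple_graph H \<Longrightarrow> adj H u v \<Longrightarrow> u \<in> verts H \<and> v \<in> verts H"
  unfolding simple_graph_def adj_def by auto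
lemma adj_neq: "simple_graph H \<Longrightarrow> adj H u v \<Longrightarrow> u \<noteq> v"
  unfolding simple_graph_def adj_def by force
lemma nbr_sub: "simple_graph H \<Longrightarrow> nbr H v \<subseteq> verts H"
  using adj_verts by (fastforce simp: nbr_def)
lemma sg_fin: "simple_graph H \<Longrightarrow> finite (verts H)" by (simp add: simple_graph_def)
lemma nbr_fin: "simple_graph H \<Longrightarrow> finite (nbr H v)"
  using nbr_sub sg_fin finite_subset by metis
lemma degree_nbr: "degree H v = card (nbr H v)" by (simp add: degree_def nbr_def)

lemma swap_nbr:
  assumes sg: "simple_graph H"
  shows "(\<Sum>v\<in>verts H. \<Sum>u\<in>nbr H v. f v u) = (\<Sum>v\<in>verts H. \<Sum>u\<in>nbr H v. f u v)"
proof -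
  have n1: "\<And>v. nbr H v = {u. u \<in> verts H \<and> adj H v u}" using adj_verts[OF sg] by (auto simp: nbr_def)
  have n2: "\<And>v. nbr H v = {u. u \<in> verts H \<and> adj H u v}" using adj_verts[OF sg] by (auto simp: nbr_def intro: adj_sym)
  show ?thesis unfolding n1
    by (subst sum.swap_restrict) (use sg_fin[OF sg] in \<open>auto simp: n2[symmetric] n1[symmetric]\<close>)
qed

lemma lap_diff: "lap H (\<lambda>v. x v - y v) w = lap H x w - lap H y w"
  unfolding lap_def sum_subtractf[symmetric] by (rule sum.cong) auto
lemma lap_add: "lap H (\<lambda>v. x v + y v) w = lap H x w + lap H y w"
  unfolding lap_def sum.distrib[symmetric] by (rule sum.cong) auto
lemma lap_scale: "lap H (\<lambda>v. c * x v) w = c * lap H x w"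
  unfolding lap_def sum_distrib_left by (rule sum.cong) (auto simp: algebra_simps)
lemma lap_neg: "lap H (\<lambda>v. - x v) w = - lap H x w"
  using lap_scale[of H "-1" x w] by simp
lemma lap_const: "lap H (\<lambda>v. x v + c) w = lap H x w"
  unfolding lap_def by simp

lemma sum_lap: assumes sg: "simple_graph H" shows "(\<Sum>v\<in>verts H. lap H x v) = 0"
proof -
  have "(\<Sum>v\<in>verts H. lap H x v) = (\<Sum>v\<in>verts H. \<Sum>u\<in>nbr H v. x v) - (\<Sum>v\<in>verts H. \<Sum>u\<in>nbr H v. x u)"
    unfolding lap_def by (simp add: sum_subtractf)
  also have "(\<Sum>v\<in>verts H. \<Sum>u\<in>nbr H v. x u) = (\<Sum>v\<in>verts H. \<Sum>u\<in>nbr H v. x v)"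
    using swap_nbr[OF sg, of "\<lambda>v u. x u"] by simp
  finally show ?thesis by simp
qed

lemma recip: assumes sg: "simple_graph H"
  shows "(\<Sum>v\<in>verts H. x v * lap H y v) = (\<Sum>v\<in>verts H. y v * lap H x v)"
proof -
  have e: "\<And>x y. (\<Sum>v\<in>verts H. x v * lap H y v) = (\<Sum>v\<in>verts H. \<Sum>u\<in>nbr H v. x v * y v) - (\<Sum>v\<in>verts H. \<Sum>u\<in>nbr H v. x v * y u)"
    unfolding lap_def by (simp add: sum_distrib_left sum_subtractf algebra_simps)
  have s: "(\<Sum>v\<in>verts H. \<Sum>u\<in>nbr H v. x v * y u) = (\<Sum>v\<in>verts H. \<Sum>u\<in>nbr H v. y v * x u)"
    using swap_nbr[OF sg, of "\<lambda>v u. x v * y u"] by (simp add: mult.commute)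
  show ?thesis unfolding e s by (simp add: mult.commute)
qed

lemma res_self: "resistance H i i = 0"
  unfolding resistance_alt
proof (rule the_equality)
  show "\<exists>x. sol H i i x \<and> 0 = x i - x i" by (rule exI[of _ "\<lambda>_. 0"]) (simp add: sol_def lap_def)
qed auto

lemma res_eq:
  assumes rg: "rigid H" and i: "i \<in> verts H" and j: "j \<in> verts H" and s: "sol H i j x"
  shows "resistance H i j = x i - x j"
  unfolding resistance_alt
proof (rule the_equality)
  show "\<exists>y. sol H i j y \<and> x i - x j = y i - y j" using s by blast
next
  fix r assume "\<exists>y. sol H i j y \<and> r = y i - y j"
  then obtain y where y: "sol H i j y" "r = y i - y j" by blast
  have "\<forall>v\<in>verts H. lap H (\<lambda>v. y v - x v) v = 0"
    using y(1) s by (simp add: sol_def lap_diff)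
  then have "y i - x i = y j - x j" using rg i j unfolding rigid_def by blast
  then show "r = x i - x j" using y(2) by simp
qed

lemma sol_neg: "sol H i j x \<Longrightarrow> sol H j i (\<lambda>v. - x v)"
  by (simp add: sol_def lap_neg)
lemma sol_diff: "sol H a w P \<Longrightarrow> sol H b w Q \<Longrightarrow> sol H a b (\<lambda>v. P v - Q v)"
  by (simp add: sol_def lap_diff)

lemma res_sym:
  assumes rg: "rigid H" and sv: "solvable H" and i: "i \<in> verts H" and j: "j \<in> verts H"
  shows "resistance H i j = resistance H j i"
proof -
  obtain x where x: "sol H i j x" using sv i j by (auto simp: solvable_def)
  show ?thesis using res_eq[OF rg i j x] res_eq[OF rg j i sol_neg[OF x]] by simp
qed

lemma sum_ind: "finite A \<Longrightarrow> (\<Sum>v\<in>A. Y v * (if v = i then 1 else 0)) = (if i \<in> A then Y i else (0::real))"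
  by (subst sum.cong[OF refl, of _ _ "\<lambda>v. if v = i then Y v else 0"]) auto

lemma cross:
  assumes sg: "simple_graph H" and rg: "rigid H" and sv: "solvable H"
    and a: "a \<in> verts H" and p: "p \<in> verts H" and w: "w \<in> verts H" and P: "sol H a w P"
  shows "P p - P w = (resistance H a w + resistance H p w - resistance H a p) / 2"
proof -
  obtain Q where Q: "sol H p w Q" using sv p w by (auto simp: solvable_def)
  have d: "\<And>X i j. sol H i j X \<Longrightarrow> i \<in> verts H \<Longrightarrow> j \<in> verts H \<Longrightarrow> (\<Sum>v\<in>verts H. Y v * lap H X v) = Y i - Y j" for Y
    unfolding sol_def using sg_fin[OF sg]
    by (simp add: right_diff_distrib sum_subtractf sum_ind)
  have "P p - P w = Q a - Q w"
    using recip[OF sg, of P Q] d[OF Q p w, of P] d[OF P a w, of Q] by simp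
  moreover have "resistance H a p = (P a - Q a) - (P p - Q p)"
    using res_eq[OF rg a p sol_diff[OF P Q]] .
  moreover have "resistance H a w = P a - P w" using res_eq[OF rg a w P] .
  moreover have "resistance H p w = Q p - Q w" using res_eq[OF rg p w Q] .
  ultimately show ?thesis by simp
qed




lemma sum_ind2: "finite A \<Longrightarrow> (\<Sum>v\<in>A. Y v * (if i = v then 1 else 0)) = (if i \<in> A then Y i else (0::real))"
  by (subst sum.cong[OF refl, of _ _ "\<lambda>v. if v = i then Y v else 0"]) auto

lemma sol_pair: assumes "simple_graph H" "sol H i j X" "i \<in> verts H" "j \<in> verts H"
  shows "(\<Sum>v\<in>verts H. Y v * lap H X v) = Y i - Y j"
  using assms sg_fin[OF assms(1)] unfolding sol_def
  by (simp add: right_diff_distrib sum_subtractf sum_ind)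

lemma conn_rigid: assumes c: "connected_graph H" shows "rigid H"
  unfolding rigid_def
proof (intro allI impI ballI)
  fix x u v assume h: "\<forall>v\<in>verts H. lap H x v = 0" and u: "u \<in> verts H" and v: "v \<in> verts H"
  have sg: "simple_graph H" using c by (simp add: connected_graph_def)
  have fin: "finite (verts H)" using sg_fin[OF sg] .
  define M where "M = Max (x ` verts H)"
  have "M \<in> x ` verts H" unfolding M_def using fin u by (intro Max_in) auto
  then obtain v0 where v0: "v0 \<in> verts H" "x v0 = M" by auto
  have le: "\<And>t. t \<in> verts H \<Longrightarrow> x t \<le> M" unfolding M_def using fin by auto
  have key: "x t = M" if "(adj H)\<^sup>*\<^sup>* v0 t" for t
    using that
  proof (induction rule: rtranclp_induct)
    case base then show ?case using v0 by simp
  next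
    case (step a b)
    have a: "a \<in> verts H" using adj_verts[OF sg step(2)] by simp
    have "lap H x a = 0" using h a by blast
    then have "(\<Sum>u\<in>nbr H a. M - x u) = 0" using step(3) by (simp add: lap_def)
    moreover have nn: "0 \<le> M - x u" if "u \<in> nbr H a" for u
    proof -
      have "u \<in> verts H" using nbr_sub[OF sg] that by blast
      then show ?thesis using le by simp
    qed
    ultimately have z: "\<forall>u\<in>nbr H a. M - x u = 0"
      using sum_nonneg_eq_0_iff[OF nbr_fin[OF sg], of a "\<lambda>u. M - x u"] by simp
    have "b \<in> nbr H a" using step(2) by (simp add: nbr_def)
    then show ?case using z by simp
  qed
  have cc: "\<forall>u\<in>verts H. \<forall>v\<in>verts H. (adj H)\<^sup>*\<^sup>* u v" using c unfolding connected_graph_def by blast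
  have "x u = M" using key[OF cc[rule_format, OF v0(1) u]] .
  moreover have "x v = M" using key[OF cc[rule_format, OF v0(1) v]] .
  ultimately
  show "x u = x v" by simp
qed

lemma lap_add': "lap H (x + y) w = lap H x w + lap H y w"
  unfolding plus_fun_def by (rule lap_add)

definition sc :: "real \<Rightarrow> ('a \<Rightarrow> real) \<Rightarrow> ('a \<Rightarrow> real)" where
  "sc c f = (\<lambda>x. c * f x)"

lemma vs_sc: "vector_space (sc :: real \<Rightarrow> ('a \<Rightarrow> real) \<Rightarrow> _)"
  by unfold_locales (auto simp: sc_def fun_eq_iff algebra_simps)

interpretation fvs: vector_space "sc :: real \<Rightarrow> ('a \<Rightarrow> real) \<Rightarrow> _"
  by (rule vs_sc)

lemma sum_fun_apply: "(sum g A) x = (\<Sum>a\<in>A. g a x)"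
  by (induction A rule: infinite_finite_induct) auto

lemma exists_lap:
  assumes sg: "simple_graph H" and rg: "rigid H" and r: "r \<in> verts H"
  shows "\<exists>f. \<forall>v \<in> verts H - {r}. lap H f v = b v"
proof -
  define V0 where "V0 = verts H - {r}"
  have finV0: "finite V0" using sg_fin[OF sg] by (simp add: V0_def)
  define \<delta> :: "'a \<Rightarrow> 'a \<Rightarrow> real" where "\<delta> v = (\<lambda>x. if x = v then 1 else 0)" for v
  define Bs where "Bs = \<delta> ` V0"
  define S0 where "S0 = {f :: 'a \<Rightarrow> real. \<forall>x. x \<notin> V0 \<longrightarrow> f x = 0}"
  define T where "T f = (\<lambda>v. if v \<in> V0 then lap H f v else 0)" for f
  have lin: "Vector_Spaces.linear sc sc T"
    unfolding Vector_Spaces.linear_iff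
    by (auto simp: vs_sc T_def sc_def fun_eq_iff lap_add' lap_scale)
  interpret T: Vector_Spaces.linear sc sc T by (rule lin)
  have injd: "inj_on \<delta> V0" unfolding inj_on_def \<delta>_def fun_eq_iff by (metis zero_neq_one)
  have finBs: "finite Bs" using finV0 by (simp add: Bs_def)
  have cardBs: "card Bs = card V0" using injd by (simp add: Bs_def card_image)
  have subS0: "fvs.subspace S0"
    unfolding fvs.subspace_def S0_def by (auto simp: sc_def)
  have spanS0: "fvs.span Bs \<subseteq> S0"
    by (rule fvs.span_minimal[OF _ subS0]) (auto simp: Bs_def S0_def \<delta>_def)
  have S0span: "S0 \<subseteq> fvs.span Bs"
  proof
    fix f assume f: "f \<in> S0"
    have "f = (\<Sum>v\<in>V0. sc (f v) (\<delta> v))"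
    proof
      fix x show "f x = (\<Sum>v\<in>V0. sc (f v) (\<delta> v)) x"
        using f finV0 by (cases "x \<in> V0") (auto simp: sum_fun_apply sc_def \<delta>_def S0_def sum_ind2)
    qed
    also have "\<dots> \<in> fvs.span Bs"
      by (intro fvs.span_sum fvs.span_scale fvs.span_base) (auto simp: Bs_def)
    finally show "f \<in> fvs.span Bs" .
  qed
  have indep: "fvs.independent Bs"
  proof -
    have "\<not> fvs.dependent Bs"
    proof
      assume "fvs.dependent Bs"
      then obtain u where u: "\<exists>g\<in>Bs. u g \<noteq> 0" "(\<Sum>g\<in>Bs. sc (u g) g) = 0"
        using fvs.dependent_finite[OF finBs] by blast
      obtain v where v: "v \<in> V0" "u (\<delta> v) \<noteq> 0" using u(1) by (auto simp: Bs_def)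
      have "0 = (\<Sum>g\<in>Bs. sc (u g) g) v" using u(2) by simp
      also have "\<dots> = (\<Sum>w\<in>V0. u (\<delta> w) * \<delta> w v)"
        by (simp add: sum_fun_apply Bs_def sum.reindex[OF injd] sc_def)
      also have "\<dots> = u (\<delta> v)"
      proof -
        have dd: "\<And>w. \<delta> w v = (if v = w then 1 else 0)" by (simp add: \<delta>_def eq_commute)
        show ?thesis unfolding dd using sum_ind2[of V0 "\<lambda>w. u (\<delta> w)" v] v(1) finV0 by simp
      qed
      finally show False using v(2) by simp
    qed
    then show ?thesis by simp
  qed
  have injT: "inj_on T S0"
  proof (rule inj_onI)
    fix f g assume f: "f \<in> S0" and g: "g \<in> S0" and e: "T f = T g"
    define h where "h v = f v - g v" for v
    have hS0: "\<forall>x. x \<notin> V0 \<longrightarrow> h x = 0" using f g by (simp add: S0_def h_def)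
    have h0: "\<forall>v\<in>V0. lap H h v = 0"
    proof
      fix v assume v: "v \<in> V0"
      have "T f v = T g v" using e by simp
      moreover have "h = (\<lambda>v. f v - g v)" by (simp add: h_def fun_eq_iff)
      ultimately show "lap H h v = 0" using v by (simp add: T_def lap_diff)
    qed
    have hr: "lap H h r = 0"
    proof -
      have "(\<Sum>v\<in>verts H. lap H h v) = lap H h r + (\<Sum>v\<in>V0. lap H h v)"
        using r sg_fin[OF sg] unfolding V0_def by (simp add: sum.remove)
      then show ?thesis using sum_lap[OF sg, of h] h0 by simp
    qed
    have "\<forall>v\<in>verts H. lap H h v = 0" using h0 hr by (auto simp: V0_def)
    then have hc: "\<forall>v\<in>verts H. h v = h r" using rg r unfolding rigid_def by blast
    have hr0: "h r = 0" using hS0 by (simp add: V0_def)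
    have "h x = 0" for x
    proof (cases "x \<in> V0")
      case True then show ?thesis using hc hr0 by (simp add: V0_def)
    next
      case False then show ?thesis using hS0 by simp
    qed
    then show "f = g" by (auto simp: h_def fun_eq_iff)
  qed
  have injT': "inj_on T (fvs.span Bs)" using inj_on_subset[OF injT spanS0] .
  have indT: "fvs.independent (T ` Bs)"
    using T.independent_injective_image[OF indep injT'] .
  have cardT: "card (T ` Bs) = card Bs"
    using inj_on_subset[OF injT' fvs.span_superset] by (rule card_image)
  have TS0: "\<And>f. T f \<in> S0" by (simp add: T_def S0_def)
  have span_le: "fvs.span Bs \<subseteq> fvs.span (T ` Bs)"
  proof
    fix b assume b: "b \<in> fvs.span Bs"
    show "b \<in> fvs.span (T ` Bs)"
    proof (rule ccontr)
      assume nb: "b \<notin> fvs.span (T ` Bs)"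
      have i2: "fvs.independent (insert b (T ` Bs))" using fvs.independent_insertI[OF nb indT] .
      have sub: "insert b (T ` Bs) \<subseteq> fvs.span Bs" using b TS0 S0span by auto
      have "card (insert b (T ` Bs)) \<le> card Bs"
        using fvs.independent_span_bound[OF finBs i2 sub] by simp
      moreover have "b \<notin> T ` Bs" using nb fvs.span_superset by blast
      ultimately show False using cardT finBs by simp
    qed
  qed
  define b' where "b' = (\<lambda>v. if v \<in> V0 then b v else 0)"
  have "b' \<in> S0" by (simp add: b'_def S0_def)
  then have "b' \<in> T ` fvs.span Bs" using S0span span_le T.span_image by auto
  then obtain f where "b' = T f" by (auto simp: image_iff)
  then have "\<forall>v\<in>V0. lap H f v = b v" unfolding b'_def T_def fun_eq_iff by metis
  then show ?thesis unfolding V0_def by blast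
qed

lemma conn_solvable: assumes c: "connected_graph H" shows "solvable H"
  unfolding solvable_def
proof (intro ballI)
  fix i j assume i: "i \<in> verts H" and j: "j \<in> verts H"
  have sg: "simple_graph H" using c by (simp add: connected_graph_def)
  define b where "b v = (if v = i then 1 else 0) - (if v = j then (1::real) else 0)" for v
  obtain f where f: "\<forall>v \<in> verts H - {i}. lap H f v = b v"
    using exists_lap[OF sg conn_rigid[OF c] i] by blast
  have fin: "finite (verts H)" using sg_fin[OF sg] .
  have sb: "(\<Sum>v\<in>verts H. b v) = 0" using i j fin by (simp add: b_def sum_subtractf)
  have "(\<Sum>v\<in>verts H. lap H f v) = lap H f i + (\<Sum>v\<in>verts H - {i}. lap H f v)"
    using i fin by (simp add: sum.remove)
  moreover have "(\<Sum>v\<in>verts H. b v) = b i + (\<Sum>v\<in>verts H - {i}. b v)"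
    using i fin by (simp add: sum.remove)
  moreover have "(\<Sum>v\<in>verts H - {i}. lap H f v) = (\<Sum>v\<in>verts H - {i}. b v)"
    using f by simp
  ultimately have "lap H f i = b i" using sum_lap[OF sg, of f] sb by simp
  then have "\<forall>v\<in>verts H. lap H f v = b v" using f by blast
  then show "\<exists>x. sol H i j x" unfolding sol_def b_def by blast
qed




lemma edges_fin: "simple_graph H \<Longrightarrow> finite (edges H)"
  unfolding simple_graph_def by (meson Pow_iff finite_Pow_iff finite_subset subsetI)

lemma edge_card: "simple_graph H \<Longrightarrow> e \<in> edges H \<Longrightarrow> card e = 2"
  unfolding simple_graph_def by blast
lemma edge_sub: "simple_graph H \<Longrightarrow> e \<in> edges H \<Longrightarrow> e \<subseteq> verts H"
  unfolding simple_graph_def by blast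
lemma edge_fin: "simple_graph H \<Longrightarrow> e \<in> edges H \<Longrightarrow> finite e"
  using edge_card by (metis card.infinite zero_neq_numeral)

lemma edge_other: assumes "simple_graph H" "e \<in> edges H" "v \<in> e"
  obtains u where "e = {v, u}" "u \<noteq> v"
proof -
  obtain a b where ab: "e = {a, b}" "a \<noteq> b" using edge_card[OF assms(1,2)] card_2_iff by metis
  show ?thesis
  proof (cases "v = a")
    case True then show ?thesis using that ab by blast
  next
    case False then have "v = b" using ab assms(3) by blast
    then show ?thesis using that ab by (metis insert_commute)
  qed
qed

lemma nbr_edges:
  assumes sg: "simple_graph H"
  shows "(\<Sum>u\<in>nbr H v. \<phi> {v, u}) = (\<Sum>e\<in>{e\<in>edges H. v \<in> e}. \<phi> e)"
proof -
  have inj: "inj_on (\<lambda>u. {v, u}) (nbr H v)"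
    unfolding inj_on_def by (metis doubleton_eq_iff)
  have img: "(\<lambda>u. {v, u}) ` nbr H v = {e\<in>edges H. v \<in> e}"
  proof
    show "(\<lambda>u. {v, u}) ` nbr H v \<subseteq> {e \<in> edges H. v \<in> e}"
      by (auto simp: nbr_def adj_def)
    show "{e \<in> edges H. v \<in> e} \<subseteq> (\<lambda>u. {v, u}) ` nbr H v"
    proof
      fix e assume "e \<in> {e \<in> edges H. v \<in> e}"
      then have e: "e \<in> edges H" "v \<in> e" by auto
      obtain u where u: "e = {v, u}" using edge_other[OF sg e] by metis
      then have "u \<in> nbr H v" using e by (simp add: nbr_def adj_def)
      then show "e \<in> (\<lambda>u. {v, u}) ` nbr H v" using u by blast
    qed
  qed
  show ?thesis using sum.reindex[OF inj, of \<phi>] img by simp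
qed

lemma degree_edges: assumes sg: "simple_graph H" shows "real (degree H v) = (\<Sum>e\<in>{e\<in>edges H. v \<in> e}. 1)"
  using nbr_edges[OF sg, where \<phi>="\<lambda>_. 1::real" and v=v] by (simp add: degree_nbr)

lemma edge_sum:
  assumes sg: "simple_graph H"
  shows "(\<Sum>v\<in>verts H. \<Sum>u\<in>nbr H v. \<phi> {v, u}) = 2 * (\<Sum>e\<in>edges H. (\<phi> e :: real))"
proof -
  have "(\<Sum>v\<in>verts H. \<Sum>u\<in>nbr H v. \<phi> {v, u}) = (\<Sum>v\<in>verts H. \<Sum>e\<in>{e\<in>edges H. v \<in> e}. \<phi> e)"
    by (intro sum.cong refl) (rule nbr_edges[OF sg])
  also have "\<dots> = (\<Sum>e\<in>edges H. \<Sum>v\<in>{v\<in>verts H. v \<in> e}. \<phi> e)"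
    by (rule sum.swap_restrict) (use sg_fin[OF sg] edges_fin[OF sg] in auto)
  also have "\<dots> = (\<Sum>e\<in>edges H. 2 * \<phi> e)"
  proof (rule sum.cong[OF refl])
    fix e assume e: "e \<in> edges H"
    have "{v\<in>verts H. v \<in> e} = e" using edge_sub[OF sg e] by blast
    then show "(\<Sum>v\<in>{v\<in>verts H. v \<in> e}. \<phi> e) = 2 * \<phi> e" using edge_card[OF sg e] by simp
  qed
  finally show ?thesis by (simp add: sum_distrib_left)
qed


lemma handshake:
  assumes sg: "simple_graph H"
  shows "(\<Sum>e\<in>edges H. \<Sum>x\<in>e. f x) = (\<Sum>v\<in>verts H. real (degree H v) * (f v :: real))"
proof -
  have "2 * (\<Sum>e\<in>edges H. \<Sum>x\<in>e. f x) = (\<Sum>v\<in>verts H. \<Sum>u\<in>nbr H v. \<Sum>x\<in>{v, u}. f x)"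
    using edge_sum[OF sg, of "\<lambda>e. \<Sum>x\<in>e. f x"] by simp
  also have "\<dots> = (\<Sum>v\<in>verts H. \<Sum>u\<in>nbr H v. f v + f u)"
  proof (intro sum.cong refl)
    fix v u assume "u \<in> nbr H v"
    then have "v \<noteq> u" using adj_neq[OF sg] by (simp add: nbr_def)
    then show "(\<Sum>x\<in>{v, u}. f x) = f v + f u" by simp
  qed
  also have "\<dots> = (\<Sum>v\<in>verts H. \<Sum>u\<in>nbr H v. f v) + (\<Sum>v\<in>verts H. \<Sum>u\<in>nbr H v. f u)"
    by (simp add: sum.distrib)
  also have "(\<Sum>v\<in>verts H. \<Sum>u\<in>nbr H v. f u) = (\<Sum>v\<in>verts H. \<Sum>u\<in>nbr H v. f v)"
    using swap_nbr[OF sg, of "\<lambda>v u. f u"] by simp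
  also have "(\<Sum>v\<in>verts H. \<Sum>u\<in>nbr H v. f v) = (\<Sum>v\<in>verts H. real (degree H v) * f v)"
    by (simp add: degree_nbr)
  finally show ?thesis by simp
qed

definition er :: "'a graph \<Rightarrow> 'a set \<Rightarrow> real" where
  "er H e = (\<Sum>s\<in>e. \<Sum>t\<in>e. resistance H s t) / 2"

lemma foster_nbr:
  assumes sg: "simple_graph H" and rg: "rigid H" and sv: "solvable H" and r: "r \<in> verts H"
  shows "(\<Sum>v\<in>verts H. \<Sum>u\<in>nbr H v. resistance H v u) = 2 * (real (card (verts H)) - 1)"
proof -
  define P where "P s = (SOME x. sol H s r x)" for s
  have P: "sol H s r (P s)" if "s \<in> verts H" for s
  proof -
    have "\<exists>x. sol H s r x" using sv that r by (auto simp: solvable_def)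
    then show ?thesis unfolding P_def by (rule someI_ex)
  qed
  define g where "g s t = P s t - P s r" for s t
  have gsym: "g s t = g t s" if "s \<in> verts H" "t \<in> verts H" for s t
    using recip[OF sg, of "P s" "P t"] sol_pair[OF sg P[OF that(2)] that(2) r, of "P s"]
      sol_pair[OF sg P[OF that(1)] that(1) r, of "P t"] by (simp add: g_def)
  have om: "resistance H s t = g s s + g t t - 2 * g s t" if "s \<in> verts H" "t \<in> verts H" for s t
    using res_eq[OF rg that sol_diff[OF P[OF that(1)] P[OF that(2)]]] gsym[OF that]
    by (simp add: g_def)
  have "(\<Sum>v\<in>verts H. \<Sum>u\<in>nbr H v. resistance H v u)
      = (\<Sum>v\<in>verts H. \<Sum>u\<in>nbr H v. g v v - g v u) + (\<Sum>v\<in>verts H. \<Sum>u\<in>nbr H v. g u u - g u v)"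
    unfolding sum.distrib[symmetric]
  proof (intro sum.cong refl)
    fix v u assume v: "v \<in> verts H" and u: "u \<in> nbr H v"
    have u': "u \<in> verts H" using nbr_sub[OF sg] u by blast
    show "resistance H v u = g v v - g v u + (g u u - g u v)"
      using om[OF v u'] gsym[OF v u'] by simp
  qed
  also have "(\<Sum>v\<in>verts H. \<Sum>u\<in>nbr H v. g u u - g u v) = (\<Sum>v\<in>verts H. \<Sum>u\<in>nbr H v. g v v - g v u)"
    using swap_nbr[OF sg, of "\<lambda>v u. g u u - g u v"] by simp
  also have "(\<Sum>v\<in>verts H. \<Sum>u\<in>nbr H v. g v v - g v u) = (\<Sum>v\<in>verts H. 1 - (if v = r then 1 else 0))"
  proof (rule sum.cong[OF refl])
    fix v assume v: "v \<in> verts H"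
    have "(\<Sum>u\<in>nbr H v. g v v - g v u) = lap H (P v) v" by (simp add: g_def lap_def)
    also have "\<dots> = 1 - (if v = r then 1 else 0)" using P[OF v] v unfolding sol_def by simp
    finally show "(\<Sum>u\<in>nbr H v. g v v - g v u) = 1 - (if v = r then 1 else 0)" .
  qed
  also have "\<dots> = real (card (verts H)) - 1" using r sg_fin[OF sg] by (simp add: sum_subtractf)
  finally show ?thesis by simp
qed

lemma er_pair: assumes "rigid H" "solvable H" "v \<in> verts H" "u \<in> verts H" "u \<noteq> v"
  shows "er H {v, u} = resistance H v u"
  using assms res_sym[OF assms(1,2,3,4)] by (simp add: er_def res_self)

lemma foster:
  assumes sg: "simple_graph H" and rg: "rigid H" and sv: "solvable H" and r: "r \<in> verts H"
  shows "(\<Sum>e\<in>edges H. er H e) = real (card (verts H)) - 1"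
proof -
  have "(\<Sum>v\<in>verts H. \<Sum>u\<in>nbr H v. er H {v, u}) = (\<Sum>v\<in>verts H. \<Sum>u\<in>nbr H v. resistance H v u)"
  proof (intro sum.cong refl)
    fix v u assume v: "v \<in> verts H" and u: "u \<in> nbr H v"
    have "u \<in> verts H" "u \<noteq> v" using nbr_sub[OF sg] u adj_neq[OF sg, of v u] by (auto simp: nbr_def)
    then show "er H {v, u} = resistance H v u" using er_pair[OF rg sv v] by simp
  qed
  then show ?thesis using edge_sum[OF sg, of "er H"] foster_nbr[OF assms] by simp
qed




definition mid :: "'a svert set \<Rightarrow> 'a svert" where "mid e = Mid (Abs_fset e)"
definition pts :: "'a svert \<Rightarrow> 'a svert set" where
  "pts y = (case y of Mid s \<Rightarrow> fset s | Orig _ \<Rightarrow> {})"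

lemma mid_inj: "finite e1 \<Longrightarrow> finite e2 \<Longrightarrow> mid e1 = mid e2 \<Longrightarrow> e1 = e2"
  unfolding mid_def by (simp add: Abs_fset_inject)
lemma pts_mid: "finite e \<Longrightarrow> pts (mid e) = e"
  unfolding mid_def pts_def by (simp add: Abs_fset_inverse)

lemma verts_S: "verts (subdivision H) = verts H \<union> mid ` edges H"
  by (simp add: subdivision_def verts_def mid_def)
lemma edges_S: "edges (subdivision H) = {{u, mid e} | u e. e \<in> edges H \<and> u \<in> e}"
  by (simp add: subdivision_def edges_def mid_def)

locale sub =
  fixes H :: "'a svert graph"
  assumes sg: "simple_graph H"
    and fr: "\<forall>e\<in>edges H. mid e \<notin> verts H"
begin

abbreviation "S \<equiv> subdivision H"

lemma mid_notin: "e \<in> edges H \<Longrightarrow> mid e \<notin> verts H" using fr by blast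
lemma mid_eq: "e1 \<in> edges H \<Longrightarrow> e2 \<in> edges H \<Longrightarrow> mid e1 = mid e2 \<longleftrightarrow> e1 = e2"
  using mid_inj edge_fin[OF sg] by metis
lemma inj_mid: "inj_on mid (edges H)" unfolding inj_on_def using mid_eq by blast
lemma mid_ne_v: "e \<in> edges H \<Longrightarrow> v \<in> verts H \<Longrightarrow> mid e \<noteq> v" using fr by blast

lemma adj_S_orig: assumes v: "v \<in> verts H"
  shows "adj S v y \<longleftrightarrow> (\<exists>e\<in>edges H. v \<in> e \<and> y = mid e)"
proof
  assume "adj S v y"
  then obtain u e where ue: "{v, y} = {u, mid e}" "e \<in> edges H" "u \<in> e"
    by (auto simp: adj_def edges_S)
  then have "v = u \<and> y = mid e \<or> v = mid e \<and> y = u" by (simp add: doubleton_eq_iff)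
  then show "\<exists>e\<in>edges H. v \<in> e \<and> y = mid e" using ue v mid_notin by blast
next
  assume "\<exists>e\<in>edges H. v \<in> e \<and> y = mid e"
  then show "adj S v y" by (auto simp: adj_def edges_S)
qed

lemma adj_S_mid: assumes e0: "e0 \<in> edges H"
  shows "adj S (mid e0) y \<longleftrightarrow> y \<in> e0"
proof
  assume "adj S (mid e0) y"
  then obtain u e where ue: "{mid e0, y} = {u, mid e}" "e \<in> edges H" "u \<in> e"
    by (auto simp: adj_def edges_S)
  then have c: "mid e0 = u \<and> y = mid e \<or> mid e0 = mid e \<and> y = u" by (simp add: doubleton_eq_iff)
  have "u \<in> verts H" using edge_sub[OF sg ue(2)] ue(3) by blast
  then have "mid e0 \<noteq> u" using mid_notin[OF e0] by blast
  then have "e0 = e" "y = u" using c mid_eq[OF e0 ue(2)] by auto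
  then show "y \<in> e0" using ue by simp
next
  assume "y \<in> e0"
  then show "adj S (mid e0) y" using e0 by (auto simp: adj_def edges_S insert_commute)
qed

lemma nbr_S_orig: "v \<in> verts H \<Longrightarrow> nbr S v = mid ` {e\<in>edges H. v \<in> e}"
  using adj_S_orig by (auto simp: nbr_def)
lemma nbr_S_mid: "e0 \<in> edges H \<Longrightarrow> nbr S (mid e0) = e0"
  using adj_S_mid by (auto simp: nbr_def)

lemma sg_S: "simple_graph S"
  unfolding simple_graph_def
proof (intro conjI ballI)
  show "finite (verts S)" using sg_fin[OF sg] edges_fin[OF sg] by (simp add: verts_S)
next
  fix e' assume "e' \<in> edges S"
  then obtain u e where ue: "e' = {u, mid e}" "e \<in> edges H" "u \<in> e" by (auto simp: edges_S)
  have u: "u \<in> verts H" using edge_sub[OF sg ue(2)] ue(3) by blast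
  show "e' \<subseteq> verts S" using ue u by (auto simp: verts_S)
  show "card e' = 2" using ue mid_ne_v[OF ue(2) u] by simp
qed

lemma inj_on_mid_sub: "inj_on mid {e\<in>edges H. v \<in> e}"
  using inj_mid by (rule inj_on_subset) auto

lemma lap_S_orig: "v \<in> verts H \<Longrightarrow> lap S f v = (\<Sum>e\<in>{e\<in>edges H. v \<in> e}. f v - f (mid e))"
  unfolding lap_def by (simp add: nbr_S_orig sum.reindex[OF inj_on_mid_sub])
lemma lap_S_mid: "e0 \<in> edges H \<Longrightarrow> lap S f (mid e0) = (\<Sum>w\<in>e0. f (mid e0) - f w)"
  unfolding lap_def by (simp add: nbr_S_mid)

lemma lap_H_edges: assumes v: "v \<in> verts H"
  shows "lap H f v = (\<Sum>e\<in>{e\<in>edges H. v \<in> e}. \<Sum>w\<in>e. f v - f w)"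
proof -
  have "lap H f v = (\<Sum>u\<in>nbr H v. \<Sum>w\<in>{v, u}. f v - f w)"
    unfolding lap_def
  proof (rule sum.cong[OF refl])
    fix u assume "u \<in> nbr H v"
    then have "v \<noteq> u" using adj_neq[OF sg] by (simp add: nbr_def)
    then show "f v - f u = (\<Sum>w\<in>{v, u}. f v - f w)" by simp
  qed
  also have "\<dots> = (\<Sum>e\<in>{e\<in>edges H. v \<in> e}. \<Sum>w\<in>e. f v - f w)"
    by (rule nbr_edges[OF sg])
  finally show ?thesis .
qed

lemma card_verts_S: "card (verts S) = card (verts H) + card (edges H)"
proof -
  have "verts H \<inter> mid ` edges H = {}" using fr by blast
  then show ?thesis using sg_fin[OF sg] edges_fin[OF sg] card_image[OF inj_mid]
    by (simp add: verts_S card_Un_disjoint)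
qed

lemma card_edges_S: "card (edges S) = 2 * card (edges H)"
proof -
  have eq: "edges S = (\<lambda>(e, u). {u, mid e}) ` (SIGMA e:edges H. e)"
    by (auto simp: edges_S)
  have inj: "inj_on (\<lambda>(e, u). {u, mid e}) (SIGMA e:edges H. e)"
  proof (rule inj_onI, clarify)
    fix e u e' u' assume a: "e \<in> edges H" "u \<in> e" "e' \<in> edges H" "u' \<in> e'" "{u, mid e} = {u', mid e'}"
    have u: "u \<in> verts H" "u' \<in> verts H" using edge_sub[OF sg] a by blast+
    have "u = u' \<and> mid e = mid e' \<or> u = mid e' \<and> mid e = u'" using a(5) by (simp add: doubleton_eq_iff)
    then have "u = u' \<and> mid e = mid e'" using u mid_ne_v a by metis
    then show "e = e' \<and> u = u'" using mid_eq a by blast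
  qed
  have "card (SIGMA e:edges H. e) = (\<Sum>e\<in>edges H. card e)"
    using edges_fin[OF sg] edge_fin[OF sg] by (simp add: card_SigmaI)
  also have "\<dots> = (\<Sum>e\<in>edges H. 2)" using edge_card[OF sg] by simp
  finally show ?thesis using eq card_image[OF inj] by simp
qed

lemma degree_S_orig: "v \<in> verts H \<Longrightarrow> degree S v = degree H v"
proof -
  assume v: "v \<in> verts H"
  have "real (degree S v) = real (card {e\<in>edges H. v \<in> e})"
    by (simp add: degree_nbr nbr_S_orig[OF v] card_image[OF inj_on_mid_sub])
  also have "\<dots> = real (degree H v)" using degree_edges[OF sg, of v] by simp
  finally show ?thesis by simp
qed

lemma degree_S_mid: "e \<in> edges H \<Longrightarrow> degree S (mid e) = 2"
  by (simp add: degree_nbr nbr_S_mid edge_card[OF sg])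

lemma rigid_S: assumes rg: "rigid H" shows "rigid S"
  unfolding rigid_def
proof (intro allI impI)
  fix f assume h: "\<forall>v\<in>verts S. lap S f v = 0"
  have fm: "f (mid e) = (\<Sum>w\<in>e. f w) / 2" if e: "e \<in> edges H" for e
  proof -
    have "lap S f (mid e) = 0" using h e by (simp add: verts_S)
    then have "(\<Sum>w\<in>e. f (mid e) - f w) = 0" using lap_S_mid[OF e] by simp
    then show ?thesis using edge_card[OF sg e] by (simp add: sum_subtractf)
  qed
  have hv: "lap H f v = 0" if v: "v \<in> verts H" for v
  proof -
    have "lap H f v = (\<Sum>e\<in>{e\<in>edges H. v \<in> e}. \<Sum>w\<in>e. f v - f w)" by (rule lap_H_edges[OF v])
    also have "\<dots> = (\<Sum>e\<in>{e\<in>edges H. v \<in> e}. 2 * (f v - f (mid e)))"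
    proof (rule sum.cong[OF refl])
      fix e assume "e \<in> {e\<in>edges H. v \<in> e}"
      then have e: "e \<in> edges H" by simp
      show "(\<Sum>w\<in>e. f v - f w) = 2 * (f v - f (mid e))"
        using fm[OF e] edge_card[OF sg e] by (simp add: sum_subtractf algebra_simps)
    qed
    also have "\<dots> = 2 * lap S f v" by (simp add: lap_S_orig[OF v] sum_distrib_left)
    also have "\<dots> = 0" using h v by (simp add: verts_S)
    finally show ?thesis .
  qed
  then have c: "\<forall>u\<in>verts H. \<forall>v\<in>verts H. f u = f v" using rg unfolding rigid_def by blast
  show "\<forall>u\<in>verts S. \<forall>v\<in>verts S. f u = f v"
  proof (cases "verts H = {}")
    case True
    have "edges H = {}"
    proof (rule ccontr)
      assume "edges H \<noteq> {}"
      then obtain e where e: "e \<in> edges H" by blast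
      then have "e = {}" using edge_sub[OF sg e] True by blast
      then show False using edge_card[OF sg e] by simp
    qed
    then show ?thesis using True by (simp add: verts_S)
  next
    case False
    then obtain v0 where v0: "v0 \<in> verts H" by blast
    define \<kappa> where "\<kappa> = f v0"
    have c': "\<forall>u\<in>verts H. f u = \<kappa>" using c v0 unfolding \<kappa>_def by blast
    have all: "f y = \<kappa>" if "y \<in> verts S" for y
    proof -
      from that consider "y \<in> verts H" | e where "e \<in> edges H" "y = mid e" by (auto simp: verts_S)
      then show ?thesis
      proof cases
        case 1 then show ?thesis using c' by simp
      next
        case 2
        have "(\<Sum>w\<in>e. f w) = (\<Sum>w\<in>e. \<kappa>)" using c' edge_sub[OF sg 2(1)] by (intro sum.cong) auto
        then show ?thesis using fm[OF 2(1)] 2 edge_card[OF sg 2(1)] by simp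
      qed
    qed
    show ?thesis using all by simp
  qed
qed

end




lemma lap_sum: "lap H (\<lambda>v. \<Sum>s\<in>A. P s v) w = (\<Sum>s\<in>A. lap H (P s) w)"
  unfolding lap_def sum_subtractf[symmetric] by (rule sum.swap)

definition Xr :: "'a graph \<Rightarrow> 'a set \<Rightarrow> 'a set \<Rightarrow> real" where
  "Xr H a b = (\<Sum>s\<in>a. \<Sum>t\<in>b. resistance H s t)"
definition Ar :: "'a graph \<Rightarrow> 'a \<Rightarrow> 'a set \<Rightarrow> real" where
  "Ar H w e = (\<Sum>s\<in>e. resistance H s w)"

lemma er_Xr: "er H e = Xr H e e / 2" by (simp add: er_def Xr_def)

locale sub2 = sub +
  assumes rg: "rigid H" and sv: "solvable H"
begin

definition ext :: "('a svert \<Rightarrow> real) \<Rightarrow> 'a svert \<Rightarrow> real" where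
  "ext x y = (if y \<in> verts H then 2 * x y else (\<Sum>w\<in>pts y. x w))"
definition bump :: "'a svert \<Rightarrow> 'a svert \<Rightarrow> real" where
  "bump c y = (if y = c then 1 else 0)"

lemma ext_orig: "v \<in> verts H \<Longrightarrow> ext x v = 2 * x v" by (simp add: ext_def)
lemma ext_mid: "e \<in> edges H \<Longrightarrow> ext x (mid e) = (\<Sum>w\<in>e. x w)"
  using mid_notin[of e] by (simp add: ext_def pts_mid edge_fin[OF sg])

lemma lap_ext_orig: assumes v: "v \<in> verts H" shows "lap S (ext x) v = lap H x v"
proof -
  have "lap S (ext x) v = (\<Sum>e\<in>{e\<in>edges H. v \<in> e}. 2 * x v - (\<Sum>w\<in>e. x w))"
    using v by (simp add: lap_S_orig ext_orig ext_mid)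
  also have "\<dots> = (\<Sum>e\<in>{e\<in>edges H. v \<in> e}. \<Sum>w\<in>e. x v - x w)"
    by (rule sum.cong[OF refl]) (simp add: sum_subtractf edge_card[OF sg])
  also have "\<dots> = lap H x v" using lap_H_edges[OF v] by simp
  finally show ?thesis .
qed

lemma lap_ext_mid: assumes e: "e \<in> edges H" shows "lap S (ext x) (mid e) = 0"
proof -
  have "lap S (ext x) (mid e) = (\<Sum>w\<in>e. (\<Sum>w\<in>e. x w) - 2 * x w)"
    using e edge_sub[OF sg e] by (simp add: lap_S_mid ext_mid ext_orig subset_iff)
  then show ?thesis using edge_card[OF sg e] by (simp add: sum_subtractf sum_distrib_left[symmetric])
qed

lemma lap_bump_orig: assumes v: "v \<in> verts H" and e0: "e0 \<in> edges H"
  shows "lap S (bump (mid e0)) v = - (if v \<in> e0 then 1 else 0)"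
proof -
  have "lap S (bump (mid e0)) v = (\<Sum>e\<in>{e\<in>edges H. v \<in> e}. - (if e = e0 then 1 else 0))"
    using v mid_ne_v[OF e0 v] by (intro trans[OF lap_S_orig[OF v]] sum.cong refl) (auto simp: bump_def mid_eq[OF _ e0])
  also have "\<dots> = - (if v \<in> e0 then 1 else 0)"
    using edges_fin[OF sg] e0 by (simp add: sum_negf)
  finally show ?thesis .
qed

lemma lap_bump_mid: assumes e: "e \<in> edges H" and e0: "e0 \<in> edges H"
  shows "lap S (bump (mid e0)) (mid e) = (if e = e0 then 2 else 0)"
proof -
  have "lap S (bump (mid e0)) (mid e) = (\<Sum>w\<in>e. (if e = e0 then 1 else 0))"
  proof (intro trans[OF lap_S_mid[OF e]] sum.cong refl)
    fix w assume "w \<in> e"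
    then have "w \<in> verts H" using edge_sub[OF sg e] by blast
    then have "w \<noteq> mid e0" using mid_ne_v[OF e0] by metis
    then show "bump (mid e0) (mid e) - bump (mid e0) w = (if e = e0 then 1 else 0)"
      by (simp add: bump_def mid_eq[OF e e0])
  qed
  then show ?thesis using edge_card[OF sg e] by simp
qed

lemma sol_S_orig: assumes i: "i \<in> verts H" and j: "j \<in> verts H" and x: "sol H i j x"
  shows "sol S i j (ext x)"
  unfolding sol_def
proof
  fix y assume "y \<in> verts S"
  then consider "y \<in> verts H" | e where "e \<in> edges H" "y = mid e" by (auto simp: verts_S)
  then show "lap S (ext x) y = (if y = i then 1 else 0) - (if y = j then 1 else 0)"
  proof cases
    case 1 then show ?thesis using x lap_ext_orig by (simp add: sol_def)
  next
    case 2 then show ?thesis using lap_ext_mid mid_ne_v[OF 2(1)] i j by simp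
  qed
qed

lemma vS: "v \<in> verts H \<Longrightarrow> v \<in> verts S" by (simp add: verts_S)
lemma mS: "e \<in> edges H \<Longrightarrow> mid e \<in> verts S" by (simp add: verts_S)

lemma res_S_orig: assumes i: "i \<in> verts H" and j: "j \<in> verts H"
  shows "resistance S i j = 2 * resistance H i j"
proof -
  obtain x where x: "sol H i j x" using sv i j by (auto simp: solvable_def)
  show ?thesis using res_eq[OF rigid_S[OF rg] vS[OF i] vS[OF j] sol_S_orig[OF i j x]]
      res_eq[OF rg i j x] ext_orig[OF i] ext_orig[OF j] by simp
qed

lemma mid_sol: assumes e0: "e0 \<in> edges H" and w: "w \<in> verts H"
  shows "\<exists>y. sol S (mid e0) w y \<and> (\<forall>e\<in>edges H. y (mid e) - y w =
      (2 * Ar H w e0 + 2 * Ar H w e - Xr H e0 e) / 4 + (if e = e0 then 1/2 else 0))"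
proof -
  define P where "P s = (SOME x. sol H s w x)" for s
  have P: "sol H s w (P s)" if "s \<in> verts H" for s
  proof -
    have "\<exists>x. sol H s w x" using sv that w by (auto simp: solvable_def)
    then show ?thesis unfolding P_def by (rule someI_ex)
  qed
  have e0V: "e0 \<subseteq> verts H" using edge_sub[OF sg e0] .
  have c0: "card e0 = 2" using edge_card[OF sg e0] .
  have f0: "finite e0" using edge_fin[OF sg e0] .
  define z where "z v = (\<Sum>s\<in>e0. P s v) / 2" for v
  define y where "y t = ext z t + (1/2) * bump (mid e0) t" for t
  have lz: "lap H z v = (if v \<in> e0 then 1/2 else 0) - (if v = w then 1 else 0)" if v: "v \<in> verts H" for v
  proof -
    have zz: "z = (\<lambda>v. (1/2) * (\<Sum>s\<in>e0. P s v))" by (simp add: z_def fun_eq_iff)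
    have "lap H z v = (1/2) * (\<Sum>s\<in>e0. lap H (P s) v)" unfolding zz lap_scale lap_sum ..
    also have "\<dots> = (1/2) * (\<Sum>s\<in>e0. (if v = s then 1 else 0) - (if v = w then 1 else 0))"
      using P e0V v by (intro arg_cong[where f="\<lambda>a. (1/2) * a"] sum.cong refl) (auto simp: sol_def)
    also have "\<dots> = (if v \<in> e0 then 1/2 else 0) - (if v = w then 1 else 0)"
      using f0 c0 by (simp add: sum_subtractf)
    finally show ?thesis .
  qed
  have yy: "y = (\<lambda>t. ext z t + (1/2) * bump (mid e0) t)" by (simp add: y_def fun_eq_iff)
  have sol: "sol S (mid e0) w y"
    unfolding sol_def
  proof
    fix t assume "t \<in> verts S"
    then consider "t \<in> verts H" | e where "e \<in> edges H" "t = mid e" by (auto simp: verts_S)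
    then show "lap S y t = (if t = mid e0 then 1 else 0) - (if t = w then 1 else 0)"
    proof cases
      case 1
      have "lap S y t = lap H z t - (1/2) * (if t \<in> e0 then 1 else 0)"
        unfolding yy lap_add lap_scale using lap_ext_orig[OF 1] lap_bump_orig[OF 1 e0] by simp
      then show ?thesis using lz[OF 1] mid_ne_v[OF e0 1] by auto
    next
      case 2
      have "lap S y t = (1/2) * (if e = e0 then 2 else 0)"
        unfolding yy lap_add lap_scale 2(2) using lap_ext_mid[OF 2(1)] lap_bump_mid[OF 2(1) e0] by simp
      then show ?thesis using 2 mid_ne_v[OF 2(1) w] by (cases "e = e0") (simp_all add: mid_eq[OF 2(1) e0])
    qed
  qed
  have zc: "z t - z w = (\<Sum>s\<in>e0. (resistance H s w + resistance H t w - resistance H s t) / 2) / 2"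
    if t: "t \<in> verts H" for t
  proof -
    have "z t - z w = (\<Sum>s\<in>e0. P s t - P s w) / 2" by (simp add: z_def sum_subtractf diff_divide_distrib)
    also have "\<dots> = (\<Sum>s\<in>e0. (resistance H s w + resistance H t w - resistance H s t) / 2) / 2"
    proof (intro arg_cong[where f="\<lambda>a. a / 2"] sum.cong refl)
      fix s assume "s \<in> e0"
      then have sV: "s \<in> verts H" using e0V by blast
      show "P s t - P s w = (resistance H s w + resistance H t w - resistance H s t) / 2"
        using cross[OF sg rg sv sV t w P[OF sV]] .
    qed
    finally show ?thesis .
  qed
  have vals: "y (mid e) - y w = (2 * Ar H w e0 + 2 * Ar H w e - Xr H e0 e) / 4 + (if e = e0 then 1/2 else 0)"
    if e: "e \<in> edges H" for e
  proof -
    have eV: "e \<subseteq> verts H" using edge_sub[OF sg e] .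
    have ce: "card e = 2" using edge_card[OF sg e] .
    have fe: "finite e" using edge_fin[OF sg e] .
    have "y (mid e) - y w = (\<Sum>t\<in>e. z t) - 2 * z w + (if e = e0 then 1/2 else 0)"
      using w mid_ne_v[OF e0 w] by (simp add: y_def ext_mid[OF e] ext_orig bump_def mid_eq[OF e e0])
    also have "(\<Sum>t\<in>e. z t) - 2 * z w = (\<Sum>t\<in>e. z t - z w)" using ce by (simp add: sum_subtractf)
    also have "\<dots> = (\<Sum>t\<in>e. (\<Sum>s\<in>e0. (resistance H s w + resistance H t w - resistance H s t) / 2) / 2)"
      using eV zc by (intro sum.cong refl) auto
    also have "\<dots> = (\<Sum>t\<in>e. \<Sum>s\<in>e0. resistance H s w + resistance H t w - resistance H s t) / 4"
      by (simp add: sum_divide_distrib)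
    also have "(\<Sum>t\<in>e. \<Sum>s\<in>e0. resistance H s w + resistance H t w - resistance H s t)
        = 2 * Ar H w e0 + 2 * Ar H w e - Xr H e0 e"
    proof -
      have "(\<Sum>t\<in>e. \<Sum>s\<in>e0. resistance H s w + resistance H t w - resistance H s t)
          = (\<Sum>t\<in>e. \<Sum>s\<in>e0. resistance H s w) + (\<Sum>t\<in>e. \<Sum>s\<in>e0. resistance H t w) - (\<Sum>t\<in>e. \<Sum>s\<in>e0. resistance H s t)"
        by (simp add: sum.distrib sum_subtractf)
      also have "(\<Sum>t\<in>e. \<Sum>s\<in>e0. resistance H s t) = Xr H e0 e" unfolding Xr_def by (rule sum.swap)
      finally show ?thesis using c0 ce by (simp add: Ar_def sum_distrib_left)
    qed
    finally show ?thesis by simp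
  qed
  show ?thesis using sol vals by blast
qed

lemma res_S_mid_orig: assumes e0: "e0 \<in> edges H" and w: "w \<in> verts H"
  shows "resistance S (mid e0) w = Ar H w e0 - er H e0 / 2 + 1/2"
proof -
  obtain y where y: "sol S (mid e0) w y" "\<forall>e\<in>edges H. y (mid e) - y w =
      (2 * Ar H w e0 + 2 * Ar H w e - Xr H e0 e) / 4 + (if e = e0 then 1/2 else 0)"
    using mid_sol[OF e0 w] by blast
  show ?thesis using res_eq[OF rigid_S[OF rg] mS[OF e0] vS[OF w] y(1)] y(2) e0
    by (simp add: er_Xr)
qed

lemma Xr_sym: assumes a: "a \<subseteq> verts H" and b: "b \<subseteq> verts H" shows "Xr H a b = Xr H b a"
proof -
  have "Xr H a b = (\<Sum>s\<in>a. \<Sum>t\<in>b. resistance H t s)"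
    unfolding Xr_def using a b res_sym[OF rg sv] by (intro sum.cong refl) blast
  also have "\<dots> = Xr H b a" unfolding Xr_def by (rule sum.swap)
  finally show ?thesis .
qed

lemma res_S_mid_mid: assumes e0: "e0 \<in> edges H" and e1: "e1 \<in> edges H"
  shows "resistance S (mid e0) (mid e1) = Xr H e0 e1 / 2 - er H e0 / 2 - er H e1 / 2 + 1 - (if e0 = e1 then 1 else 0)"
proof -
  have "card e0 = 2" using edge_card[OF sg e0] .
  then obtain w where w0: "w \<in> e0" by (metis card.empty ex_in_conv zero_neq_numeral)
  have w: "w \<in> verts H" using edge_sub[OF sg e0] w0 by blast
  obtain y0 where y0: "sol S (mid e0) w y0" "\<forall>e\<in>edges H. y0 (mid e) - y0 w =
      (2 * Ar H w e0 + 2 * Ar H w e - Xr H e0 e) / 4 + (if e = e0 then 1/2 else 0)"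
    using mid_sol[OF e0 w] by blast
  obtain y1 where y1: "sol S (mid e1) w y1" "\<forall>e\<in>edges H. y1 (mid e) - y1 w =
      (2 * Ar H w e1 + 2 * Ar H w e - Xr H e1 e) / 4 + (if e = e1 then 1/2 else 0)"
    using mid_sol[OF e1 w] by blast
  have r: "resistance S (mid e0) (mid e1) = (y0 (mid e0) - y1 (mid e0)) - (y0 (mid e1) - y1 (mid e1))"
    using res_eq[OF rigid_S[OF rg] mS[OF e0] mS[OF e1] sol_diff[OF y0(1) y1(1)]] .
  have eq: "(y0 (mid e0) - y1 (mid e0)) - (y0 (mid e1) - y1 (mid e1))
     = (y0 (mid e0) - y0 w) - (y1 (mid e0) - y1 w) - (y0 (mid e1) - y0 w) + (y1 (mid e1) - y1 w)" by simp
  have xs: "Xr H e1 e0 = Xr H e0 e1" using Xr_sym edge_sub[OF sg] e0 e1 by metis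
  have a0: "y0 (mid e0) - y0 w = (2 * Ar H w e0 + 2 * Ar H w e0 - Xr H e0 e0) / 4 + 1/2"
    using y0(2) e0 by simp
  have a1: "y0 (mid e1) - y0 w = (2 * Ar H w e0 + 2 * Ar H w e1 - Xr H e0 e1) / 4 + (if e1 = e0 then 1/2 else 0)"
    using y0(2) e1 by blast
  have b0: "y1 (mid e0) - y1 w = (2 * Ar H w e1 + 2 * Ar H w e0 - Xr H e1 e0) / 4 + (if e0 = e1 then 1/2 else 0)"
    using y1(2) e0 by blast
  have b1: "y1 (mid e1) - y1 w = (2 * Ar H w e1 + 2 * Ar H w e1 - Xr H e1 e1) / 4 + 1/2"
    using y1(2) e1 by simp
  show ?thesis unfolding r eq a0 a1 b0 b1 xs
    by (cases "e0 = e1") (simp_all add: er_Xr field_simps)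
qed

end




lemma Rplus_alt:
  assumes sg: "simple_graph H" and rg: "rigid H" and sv: "solvable H"
  shows "Rplus H = (\<Sum>x\<in>verts H. \<Sum>y\<in>verts H. real (degree H x) * resistance H x y)"
proof -
  have "Rplus H = (\<Sum>x\<in>verts H. \<Sum>y\<in>verts H. real (degree H x + degree H y) * resistance H x y) / 2"
    unfolding Rplus_def by (intro arg_cong[where f="\<lambda>a. a / 2"] sum.cong refl) (simp add: res_self)
  also have "\<dots> = ((\<Sum>x\<in>verts H. \<Sum>y\<in>verts H. real (degree H x) * resistance H x y)
       + (\<Sum>x\<in>verts H. \<Sum>y\<in>verts H. real (degree H y) * resistance H x y)) / 2"
    by (simp add: sum.distrib algebra_simps)
  also have "(\<Sum>x\<in>verts H. \<Sum>y\<in>verts H. real (degree H y) * resistance H x y)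
      = (\<Sum>x\<in>verts H. \<Sum>y\<in>verts H. real (degree H x) * resistance H x y)"
    by (subst sum.swap) (intro sum.cong refl, simp add: res_sym[OF rg sv])
  finally show ?thesis by simp
qed

lemma Rstar_alt:
  shows "Rstar H = (\<Sum>x\<in>verts H. \<Sum>y\<in>verts H. real (degree H x) * real (degree H y) * resistance H x y) / 2"
  unfolding Rstar_def by (intro arg_cong[where f="\<lambda>a. a / 2"] sum.cong refl) (simp add: res_self)

context sub2
begin

lemma sol_to_w: assumes w: "w \<in> verts H" and c: "c \<in> verts S" shows "\<exists>y. sol S c w y"
proof -
  from c consider "c \<in> verts H" | e where "e \<in> edges H" "c = mid e" by (auto simp: verts_S)
  then show ?thesis
  proof cases
    case 1
    obtain x where "sol H c w x" using sv 1 w by (auto simp: solvable_def)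
    then show ?thesis using sol_S_orig[OF 1 w] by blast
  next
    case 2 then show ?thesis using mid_sol[OF 2(1) w] by blast
  qed
qed

lemma solvable_S: "solvable S"
  unfolding solvable_def
proof (intro ballI)
  fix i j assume i: "i \<in> verts S" and j: "j \<in> verts S"
  obtain w where w: "w \<in> verts H"
  proof -
    from i consider "i \<in> verts H" | e where "e \<in> edges H" "i = mid e" by (auto simp: verts_S)
    then show ?thesis
    proof cases
      case 1 then show ?thesis using that by blast
    next
      case 2
      have "card e = 2" using edge_card[OF sg 2(1)] .
      then obtain u where "u \<in> e" by (metis card.empty ex_in_conv zero_neq_numeral)
      then show ?thesis using that edge_sub[OF sg 2(1)] by blast
    qed
  qed
  obtain yi where yi: "sol S i w yi" using sol_to_w[OF w i] by blast
  obtain yj where yj: "sol S j w yj" using sol_to_w[OF w j] by blast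
  show "\<exists>x. sol S i j x" using sol_diff[OF yi yj] by blast
qed

lemma sumS: "(\<Sum>y\<in>verts S. g y) = (\<Sum>v\<in>verts H. g v) + (\<Sum>e\<in>edges H. g (mid e))"
proof -
  have "verts H \<inter> mid ` edges H = {}" using fr by blast
  then show ?thesis using sg_fin[OF sg] edges_fin[OF sg]
    by (simp add: verts_S sum.union_disjoint sum.reindex[OF inj_mid])
qed

abbreviation "D v \<equiv> real (degree H v)"
abbreviation "\<Omega> \<equiv> resistance H"
abbreviation "\<Omega>' \<equiv> resistance S"

lemma res_S_orig_mid: assumes e0: "e0 \<in> edges H" and w: "w \<in> verts H"
  shows "\<Omega>' w (mid e0) = Ar H w e0 - er H e0 / 2 + 1/2"
  using res_S_mid_orig[OF e0 w] res_sym[OF rigid_S[OF rg] solvable_S mS[OF e0] vS[OF w]] by simp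

lemma h1: "(\<Sum>f\<in>edges H. Ar H v f) = (\<Sum>s\<in>verts H. D s * \<Omega> s v)"
  unfolding Ar_def by (rule handshake[OF sg])

lemma h4: "(\<Sum>v\<in>verts H. D v) = 2 * real (card (edges H))"
  using handshake[OF sg, of "\<lambda>_. 1"] edge_card[OF sg] by simp

lemma h3: "(\<Sum>e\<in>edges H. \<Sum>f\<in>edges H. Xr H e f) = (\<Sum>s\<in>verts H. \<Sum>t\<in>verts H. D s * D t * \<Omega> s t)"
proof -
  have "(\<Sum>e\<in>edges H. \<Sum>f\<in>edges H. Xr H e f) = (\<Sum>e\<in>edges H. \<Sum>s\<in>e. \<Sum>f\<in>edges H. \<Sum>t\<in>f. \<Omega> s t)"
    unfolding Xr_def by (intro sum.cong refl) (rule sum.swap)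
  also have "\<dots> = (\<Sum>e\<in>edges H. \<Sum>s\<in>e. \<Sum>t\<in>verts H. D t * \<Omega> s t)"
    using handshake[OF sg] by simp
  also have "\<dots> = (\<Sum>s\<in>verts H. D s * (\<Sum>t\<in>verts H. D t * \<Omega> s t))"
    by (rule handshake[OF sg])
  finally show ?thesis by (simp add: sum_distrib_left mult.assoc)
qed

end




context sub2
begin

definition "nn = real (card (verts H))"
definition "mm = real (card (edges H))"
definition "RS2 = (\<Sum>v\<in>verts H. \<Sum>w\<in>verts H. D v * D w * \<Omega> v w)"
definition "RP = (\<Sum>v\<in>verts H. \<Sum>w\<in>verts H. D v * \<Omega> v w)"

lemma fost: assumes ne: "verts H \<noteq> {}" shows "(\<Sum>e\<in>edges H. er H e) = nn - 1"
  using foster[OF sg rg sv] ne unfolding nn_def by blast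

lemma sum_if_eq: "(\<Sum>f\<in>edges H. (if e = f then 1 else 0)) = (if e \<in> edges H then 1 else (0::real))"
  using edges_fin[OF sg] by (simp add: sum.delta)

lemma T2: assumes ne: "verts H \<noteq> {}"
  shows "(\<Sum>v\<in>verts H. \<Sum>f\<in>edges H. D v * \<Omega>' v (mid f)) = RS2 + mm * (mm - nn + 1)"
proof -
  define c where "c = (mm - (nn - 1)) / 2"
  have "(\<Sum>v\<in>verts H. \<Sum>f\<in>edges H. D v * \<Omega>' v (mid f))
      = (\<Sum>v\<in>verts H. D v * (\<Sum>f\<in>edges H. Ar H v f - er H f / 2 + 1/2))"
    by (intro sum.cong refl) (simp add: res_S_orig_mid sum_distrib_left)
  also have "\<dots> = (\<Sum>v\<in>verts H. D v * (\<Sum>s\<in>verts H. D s * \<Omega> s v) + D v * c)"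
    by (intro sum.cong refl)
       (simp add: c_def sum.distrib sum_subtractf h1 fost[OF ne] sum_divide_distrib[symmetric] mm_def algebra_simps,
        simp add: field_simps)
  also have "\<dots> = (\<Sum>v\<in>verts H. \<Sum>s\<in>verts H. D v * D s * \<Omega> s v) + (\<Sum>v\<in>verts H. D v) * c"
    unfolding sum.distrib sum_distrib_right sum_distrib_left by (simp add: mult.assoc)
  also have "(\<Sum>v\<in>verts H. D v) = 2 * mm" using h4 by (simp add: mm_def)
  also have "(\<Sum>v\<in>verts H. \<Sum>s\<in>verts H. D v * D s * \<Omega> s v) = RS2"
    unfolding RS2_def by (subst sum.swap) (simp add: mult.commute)
  finally have "(\<Sum>v\<in>verts H. \<Sum>f\<in>edges H. D v * \<Omega>' v (mid f)) = RS2 + 2 * mm * c" .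
  moreover have "2 * mm * c = mm * (mm - nn + 1)" by (simp add: c_def field_simps)
  ultimately show ?thesis by simp
qed

lemma T2': assumes ne: "verts H \<noteq> {}"
  shows "(\<Sum>e\<in>edges H. \<Sum>w\<in>verts H. D w * \<Omega>' (mid e) w) = RS2 + mm * (mm - nn + 1)"
proof -
  have "(\<Sum>e\<in>edges H. \<Sum>w\<in>verts H. D w * \<Omega>' (mid e) w) = (\<Sum>w\<in>verts H. \<Sum>e\<in>edges H. D w * \<Omega>' w (mid e))"
    by (subst sum.swap) (intro sum.cong refl, simp add: res_S_orig_mid res_S_mid_orig)
  then show ?thesis using T2[OF ne] by simp
qed

lemma T3: assumes ne: "verts H \<noteq> {}"
  shows "(\<Sum>e\<in>edges H. \<Sum>w\<in>verts H. \<Omega>' (mid e) w) = RP + nn * (mm - (nn - 1)) / 2"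
proof -
  have "(\<Sum>e\<in>edges H. \<Sum>w\<in>verts H. \<Omega>' (mid e) w) = (\<Sum>w\<in>verts H. \<Sum>e\<in>edges H. Ar H w e - er H e / 2 + 1/2)"
    by (subst sum.swap) (intro sum.cong refl, simp add: res_S_mid_orig)
  also have "\<dots> = (\<Sum>w\<in>verts H. (\<Sum>s\<in>verts H. D s * \<Omega> s w) + (mm - (nn - 1)) / 2)"
    by (intro sum.cong refl)
       (simp add: sum.distrib sum_subtractf h1 fost[OF ne] sum_divide_distrib[symmetric] mm_def algebra_simps,
        simp add: field_simps)
  also have "\<dots> = (\<Sum>w\<in>verts H. \<Sum>s\<in>verts H. D s * \<Omega> s w) + nn * ((mm - (nn - 1)) / 2)"
    by (simp add: sum.distrib nn_def)
  also have "(\<Sum>w\<in>verts H. \<Sum>s\<in>verts H. D s * \<Omega> s w) = RP"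
    unfolding RP_def by (rule sum.swap)
  finally show ?thesis by simp
qed

lemma T4: assumes ne: "verts H \<noteq> {}"
  shows "(\<Sum>e\<in>edges H. \<Sum>f\<in>edges H. \<Omega>' (mid e) (mid f)) = RS2 / 2 - mm * (nn - 1) + mm * mm - mm"
proof -
  have "(\<Sum>e\<in>edges H. \<Sum>f\<in>edges H. \<Omega>' (mid e) (mid f))
     = (\<Sum>e\<in>edges H. \<Sum>f\<in>edges H. Xr H e f / 2 - (er H e / 2 + er H f / 2) + (1 - (if e = f then 1 else 0)))"
    by (intro sum.cong refl) (simp add: res_S_mid_mid)
  also have "\<dots> = (\<Sum>e\<in>edges H. \<Sum>f\<in>edges H. Xr H e f / 2) - (\<Sum>e\<in>edges H. \<Sum>f\<in>edges H. er H e / 2 + er H f / 2)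
      + (\<Sum>e\<in>edges H. \<Sum>f\<in>edges H. 1 - (if e = f then 1 else 0))"
    by (simp add: sum.distrib sum_subtractf)
  also have "(\<Sum>e\<in>edges H. \<Sum>f\<in>edges H. Xr H e f / 2) = RS2 / 2"
    using h3 by (simp add: sum_divide_distrib[symmetric] RS2_def)
  also have "(\<Sum>e\<in>edges H. \<Sum>f\<in>edges H. er H e / 2 + er H f / 2) = mm * (nn - 1)"
  proof -
    have "(\<Sum>e\<in>edges H. \<Sum>f\<in>edges H. er H e / 2 + er H f / 2)
        = (\<Sum>e\<in>edges H. mm * er H e / 2 + (nn - 1) / 2)"
      by (intro sum.cong refl) (simp add: sum.distrib sum_divide_distrib[symmetric] fost[OF ne] mm_def)
    also have "\<dots> = mm * (nn - 1) / 2 + mm * (nn - 1) / 2"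
      by (simp add: sum.distrib sum_divide_distrib[symmetric] sum_distrib_left[symmetric] fost[OF ne] mm_def)
    finally show ?thesis by simp
  qed
  also have "(\<Sum>e\<in>edges H. \<Sum>f\<in>edges H. 1 - (if e = f then 1 else (0::real))) = mm * mm - mm"
    by (simp add: sum_subtractf sum_if_eq mm_def algebra_simps)
  finally show ?thesis by simp
qed

end




context sub2
begin

lemma RP_eq: "RP = Rplus H" unfolding RP_def using Rplus_alt[OF sg rg sv] by simp
lemma RS2_eq: "RS2 = 2 * Rstar H" unfolding RS2_def Rstar_alt by simp

lemma T1: "(\<Sum>v\<in>verts H. \<Sum>w\<in>verts H. D v * \<Omega>' v w) = 2 * RP"
  unfolding RP_def sum_distrib_left by (intro sum.cong refl) (simp add: res_S_orig)
lemma T1s: "(\<Sum>v\<in>verts H. \<Sum>w\<in>verts H. D v * D w * \<Omega>' v w) = 2 * RS2"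
  unfolding RS2_def sum_distrib_left by (intro sum.cong refl) (simp add: res_S_orig)

lemma step_Rplus: assumes ne: "verts H \<noteq> {}"
  shows "Rplus S = 4 * Rplus H + 4 * Rstar H + 3 * mm * mm - 2 * mm * nn + mm - nn * nn + nn"
proof -
  have "Rplus S = (\<Sum>x\<in>verts S. \<Sum>y\<in>verts S. real (degree S x) * \<Omega>' x y)"
    using Rplus_alt[OF sg_S rigid_S[OF rg] solvable_S] .
  also have "\<dots> = (\<Sum>v\<in>verts H. \<Sum>w\<in>verts H. D v * \<Omega>' v w) + (\<Sum>v\<in>verts H. \<Sum>f\<in>edges H. D v * \<Omega>' v (mid f))
     + (2 * (\<Sum>e\<in>edges H. \<Sum>w\<in>verts H. \<Omega>' (mid e) w) + 2 * (\<Sum>e\<in>edges H. \<Sum>f\<in>edges H. \<Omega>' (mid e) (mid f)))"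
    by (simp add: sumS sum.distrib degree_S_orig degree_S_mid sum_distrib_left)
  finally show ?thesis using T1 T2[OF ne] T3[OF ne] T4[OF ne] RP_eq RS2_eq by (simp add: field_simps)
qed

lemma step_Rstar: assumes ne: "verts H \<noteq> {}"
  shows "Rstar S = 8 * Rstar H + 2 * mm * (2 * mm - 2 * nn + 1)"
proof -
  have "Rstar S = (\<Sum>x\<in>verts S. \<Sum>y\<in>verts S. real (degree S x) * real (degree S y) * \<Omega>' x y) / 2"
    using Rstar_alt .
  also have "(\<Sum>x\<in>verts S. \<Sum>y\<in>verts S. real (degree S x) * real (degree S y) * \<Omega>' x y)
     = (\<Sum>v\<in>verts H. \<Sum>w\<in>verts H. D v * D w * \<Omega>' v w) + 2 * (\<Sum>v\<in>verts H. \<Sum>f\<in>edges H. D v * \<Omega>' v (mid f))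
     + (2 * (\<Sum>e\<in>edges H. \<Sum>w\<in>verts H. D w * \<Omega>' (mid e) w) + 4 * (\<Sum>e\<in>edges H. \<Sum>f\<in>edges H. \<Omega>' (mid e) (mid f)))"
    by (simp add: sumS sum.distrib degree_S_orig degree_S_mid sum_distrib_left algebra_simps)
  finally show ?thesis using T1s T2[OF ne] T2'[OF ne] T4[OF ne] RS2_eq by (simp add: algebra_simps)
qed

end




primrec depth :: "'a svert \<Rightarrow> nat" where
  "depth (Orig a) = 0"
| "depth (Mid s) = Suc (Max (insert 0 (fset (fimage depth s))))"

definition lvl :: "nat \<Rightarrow> 'a svert graph \<Rightarrow> bool" where
  "lvl k H \<longleftrightarrow> (\<forall>v\<in>verts H. depth v \<le> k) \<and> (\<forall>e\<in>edges H. \<exists>x\<in>e. depth x = k)"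

lemma depth_mid: assumes sg: "simple_graph H" and l: "lvl k H" and e: "e \<in> edges H"
  shows "depth (mid e) = Suc k"
proof -
  have fe: "finite e" using edge_fin[OF sg e] .
  have eV: "e \<subseteq> verts H" using edge_sub[OF sg e] .
  have "depth (mid e) = Suc (Max (insert 0 (depth ` e)))"
    unfolding mid_def using fe by (simp add: fimage.rep_eq Abs_fset_inverse)
  moreover have "Max (insert 0 (depth ` e)) = k"
  proof (rule antisym)
    show "Max (insert 0 (depth ` e)) \<le> k" using fe eV l by (auto simp: lvl_def)
    obtain x where "x \<in> e" "depth x = k" using l e by (auto simp: lvl_def)
    then show "k \<le> Max (insert 0 (depth ` e))" using fe by (metis Max_ge finite_imageI finite_insert image_eqI insertI2)
  qed
  ultimately show ?thesis by simp
qed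

definition inv :: "nat \<Rightarrow> 'a svert graph \<Rightarrow> bool" where
  "inv k H \<longleftrightarrow> simple_graph H \<and> rigid H \<and> solvable H \<and> verts H \<noteq> {} \<and> lvl k H"

lemma step:
  assumes I: "inv k H"
  shows "inv (Suc k) (subdivision H)"
    and "card (verts (subdivision H)) = card (verts H) + card (edges H)"
    and "card (edges (subdivision H)) = 2 * card (edges H)"
    and "Rplus (subdivision H) = 4 * Rplus H + 4 * Rstar H + 3 * real (card (edges H)) * real (card (edges H))
          - 2 * real (card (edges H)) * real (card (verts H)) + real (card (edges H))
          - real (card (verts H)) * real (card (verts H)) + real (card (verts H))"
    and "Rstar (subdivision H) = 8 * Rstar H + 2 * real (card (edges H)) * (2 * real (card (edges H)) - 2 * real (card (verts H)) + 1)"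
proof -
  have sg: "simple_graph H" and rg: "rigid H" and sv: "solvable H" and ne: "verts H \<noteq> {}" and l: "lvl k H"
    using I by (auto simp: inv_def)
  have fr: "\<forall>e\<in>edges H. mid e \<notin> verts H"
  proof
    fix e assume e: "e \<in> edges H"
    have "depth (mid e) = Suc k" using depth_mid[OF sg l e] .
    then show "mid e \<notin> verts H" using l by (auto simp: lvl_def)
  qed
  interpret sub2 H using sg fr rg sv by unfold_locales auto
  have lS: "lvl (Suc k) S"
    unfolding lvl_def
  proof (intro conjI ballI)
    fix v assume "v \<in> verts S"
    then consider "v \<in> verts H" | e where "e \<in> edges H" "v = mid e" by (auto simp: verts_S)
    then show "depth v \<le> Suc k"
    proof cases
      case 1 then show ?thesis using l by (auto simp: lvl_def)
    next
      case 2 then show ?thesis using depth_mid[OF sg l] by simp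
    qed
  next
    fix e' assume "e' \<in> edges S"
    then obtain u e where ue: "e' = {u, mid e}" "e \<in> edges H" "u \<in> e" by (auto simp: edges_S)
    then show "\<exists>x\<in>e'. depth x = Suc k" using depth_mid[OF sg l ue(2)] by blast
  qed
  show "inv (Suc k) (subdivision H)"
    unfolding inv_def using sg_S rigid_S[OF rg] solvable_S lS ne by (auto simp: verts_S)
  show "card (verts (subdivision H)) = card (verts H) + card (edges H)" by (rule card_verts_S)
  show "card (edges (subdivision H)) = 2 * card (edges H)" by (rule card_edges_S)
  show "Rplus (subdivision H) = 4 * Rplus H + 4 * Rstar H + 3 * real (card (edges H)) * real (card (edges H))
          - 2 * real (card (edges H)) * real (card (verts H)) + real (card (edges H))
          - real (card (verts H)) * real (card (verts H)) + real (card (verts H))"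
    using step_Rplus[OF ne] by (simp add: mm_def nn_def)
  show "Rstar (subdivision H) = 8 * Rstar H + 2 * real (card (edges H)) * (2 * real (card (edges H)) - 2 * real (card (verts H)) + 1)"
    using step_Rstar[OF ne] by (simp add: mm_def nn_def)
qed




definition liftf :: "('a \<Rightarrow> real) \<Rightarrow> 'a svert \<Rightarrow> real" where
  "liftf x y = (case y of Orig a \<Rightarrow> x a | Mid _ \<Rightarrow> 0)"

lemma liftf_Orig[simp]: "liftf x (Orig a) = x a" by (simp add: liftf_def)

lemma verts_lift: "verts (lift_graph G) = Orig ` verts G" by (simp add: lift_graph_def verts_def)
lemma edges_lift: "edges (lift_graph G) = (\<lambda>e. Orig ` e) ` edges G" by (simp add: lift_graph_def edges_def)

lemma inj_Orig: "inj Orig" by (simp add: inj_def)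
lemma inj_img: "inj (\<lambda>e. Orig ` e)"
  unfolding inj_def using inj_image_eq_iff[OF inj_Orig] by blast

lemma adj_lift: "adj (lift_graph G) (Orig u) (Orig v) \<longleftrightarrow> adj G u v"
proof -
  have "{Orig u, Orig v} = Orig ` {u, v}" by simp
  then show ?thesis unfolding adj_def edges_lift
    using inj_image_eq_iff[OF inj_img] by (metis (no_types, lifting) image_iff inj_img injD)
qed

lemma adj_lift_Orig: "adj (lift_graph G) (Orig u) y \<Longrightarrow> \<exists>v. y = Orig v"
  unfolding adj_def edges_lift by auto

lemma nbr_lift: "nbr (lift_graph G) (Orig v) = Orig ` nbr G v"
proof
  show "nbr (lift_graph G) (Orig v) \<subseteq> Orig ` nbr G v"
  proof
    fix y assume "y \<in> nbr (lift_graph G) (Orig v)"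
    then have a: "adj (lift_graph G) (Orig v) y" by (simp add: nbr_def)
    obtain u where "y = Orig u" using adj_lift_Orig[OF a] by blast
    moreover have "adj G v u" using a calculation adj_lift[of G v u] by simp
    ultimately show "y \<in> Orig ` nbr G v" by (auto simp: nbr_def)
  qed
  show "Orig ` nbr G v \<subseteq> nbr (lift_graph G) (Orig v)"
  proof
    fix y assume "y \<in> Orig ` nbr G v"
    then obtain u where u: "y = Orig u" "adj G v u" by (auto simp: nbr_def)
    then show "y \<in> nbr (lift_graph G) (Orig v)" using adj_lift[of G v u] by (simp add: nbr_def)
  qed
qed

lemma degree_lift: "degree (lift_graph G) (Orig v) = degree G v"
  by (simp add: degree_nbr nbr_lift card_image inj_on_subset[OF inj_Orig])

lemma lap_lift: "lap (lift_graph G) (liftf x) (Orig v) = lap G x v"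
  unfolding lap_def nbr_lift by (simp add: sum.reindex inj_on_subset[OF inj_Orig])

lemma sg_lift: assumes sg: "simple_graph G" shows "simple_graph (lift_graph G)"
  unfolding simple_graph_def
proof (intro conjI ballI)
  show "finite (verts (lift_graph G))" using sg_fin[OF sg] by (simp add: verts_lift)
next
  fix e' assume "e' \<in> edges (lift_graph G)"
  then obtain e where e: "e \<in> edges G" "e' = Orig ` e" by (auto simp: edges_lift)
  show "e' \<subseteq> verts (lift_graph G)" using e edge_sub[OF sg e(1)] by (auto simp: verts_lift)
  show "card e' = 2" using e edge_card[OF sg e(1)] by (simp add: card_image inj_on_def)
qed

lemma conn_lift: assumes c: "connected_graph G" shows "connected_graph (lift_graph G)"
proof -
  have sg: "simple_graph G" using c by (simp add: connected_graph_def)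
  have cc: "\<forall>u\<in>verts G. \<forall>v\<in>verts G. (adj G)\<^sup>*\<^sup>* u v" using c by (simp add: connected_graph_def)
  have tr: "(adj (lift_graph G))\<^sup>*\<^sup>* (Orig u) (Orig v)" if "(adj G)\<^sup>*\<^sup>* u v" for u v
    using that
  proof (induction rule: rtranclp_induct)
    case base then show ?case by (rule rtranclp.rtrancl_refl)
  next
    case (step a b)
    have "adj (lift_graph G) (Orig a) (Orig b)" using step(2) adj_lift by metis
    then show ?case using step(3) by (rule rtranclp.rtrancl_into_rtrancl[rotated])
  qed
  show ?thesis unfolding connected_graph_def
  proof (intro conjI ballI)
    show "simple_graph (lift_graph G)" using sg_lift[OF sg] .
    fix x y assume "x \<in> verts (lift_graph G)" "y \<in> verts (lift_graph G)"
    then obtain u v where uv: "x = Orig u" "y = Orig v" "u \<in> verts G" "v \<in> verts G" by (auto simp: verts_lift)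
    show "(adj (lift_graph G))\<^sup>*\<^sup>* x y" unfolding uv(1,2) using tr cc uv(3,4) by blast
  qed
qed

lemma res_lift: assumes c: "connected_graph G" and i: "i \<in> verts G" and j: "j \<in> verts G"
  shows "resistance (lift_graph G) (Orig i) (Orig j) = resistance G i j"
proof -
  obtain x where x: "sol G i j x" using conn_solvable[OF c] i j by (auto simp: solvable_def)
  have xl: "sol (lift_graph G) (Orig i) (Orig j) (liftf x)"
    unfolding sol_def
  proof
    fix y assume "y \<in> verts (lift_graph G)"
    then obtain v where v: "y = Orig v" "v \<in> verts G" by (auto simp: verts_lift)
    show "lap (lift_graph G) (liftf x) y = (if y = Orig i then 1 else 0) - (if y = Orig j then 1 else 0)"
      using x v by (simp add: lap_lift sol_def)
  qed
  have iL: "Orig i \<in> verts (lift_graph G)" "Orig j \<in> verts (lift_graph G)" using i j by (auto simp: verts_lift)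
  show ?thesis using res_eq[OF conn_rigid[OF conn_lift[OF c]] iL xl] res_eq[OF conn_rigid[OF c] i j x] by simp
qed

lemma Rplus_lift: assumes c: "connected_graph G" shows "Rplus (lift_graph G) = Rplus G"
  unfolding Rplus_def verts_lift
  by (simp add: sum.reindex inj_on_subset[OF inj_Orig], intro sum.cong refl, simp add: degree_lift res_lift[OF c])

lemma Rstar_lift: assumes c: "connected_graph G" shows "Rstar (lift_graph G) = Rstar G"
  unfolding Rstar_def verts_lift
  by (simp add: sum.reindex inj_on_subset[OF inj_Orig], intro sum.cong refl, simp add: degree_lift res_lift[OF c])

lemma inv_lift: assumes c: "connected_graph G" and ne: "verts G \<noteq> {}" shows "inv 0 (lift_graph G)"
proof -
  have sg: "simple_graph G" using c by (simp add: connected_graph_def)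
  have l: "lvl 0 (lift_graph G)"
    unfolding lvl_def
  proof (intro conjI ballI)
    fix v assume "v \<in> verts (lift_graph G)" then show "depth v \<le> 0" by (auto simp: verts_lift)
  next
    fix e' assume "e' \<in> edges (lift_graph G)"
    then obtain e where e: "e \<in> edges G" "e' = Orig ` e" by (auto simp: edges_lift)
    have "e \<noteq> {}" using edge_card[OF sg e(1)] by auto
    then show "\<exists>x\<in>e'. depth x = 0" using e by auto
  qed
  show ?thesis unfolding inv_def
    using conn_lift[OF c] conn_rigid[OF conn_lift[OF c]] conn_solvable[OF conn_lift[OF c]] l ne
    by (auto simp: connected_graph_def verts_lift)
qed

lemma card_verts_lift: "card (verts (lift_graph G)) = card (verts G)"
  by (simp add: verts_lift card_image inj_on_subset[OF inj_Orig])
lemma card_edges_lift: "card (edges (lift_graph G)) = card (edges G)"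
  by (simp add: edges_lift card_image inj_on_subset[OF inj_img])

lemma alg:
  fixes x m n P Q :: real
  defines "c \<equiv> 2 * m - 2 * n + 1" and "q \<equiv> (m - n) * (m - n + 1)"
  shows "4 * (x^2 * P + (x^3 - x^2) * Q + (x^3 - x) / 3 * m * c - (x^2 - 1) / 3 * q)
       + 4 * (x^3 * Q + (x^3 - x) / 3 * m * c) + 3 * (x * m) * (x * m) - 2 * (x * m) * (n + (x - 1) * m)
       + x * m - (n + (x - 1) * m) * (n + (x - 1) * m) + (n + (x - 1) * m)
     = (2*x)^2 * P + ((2*x)^3 - (2*x)^2) * Q + ((2*x)^3 - 2*x) / 3 * m * c - ((2*x)^2 - 1) / 3 * q"
    and "8 * (x^3 * Q + (x^3 - x) / 3 * m * c) + 2 * (x * m) * (2 * (x * m) - 2 * (n + (x - 1) * m) + 1)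
     = (2*x)^3 * Q + ((2*x)^3 - 2*x) / 3 * m * c"
  unfolding c_def q_def by (simp_all add: field_simps power2_eq_square power3_eq_cube)

theorem theorem3p3:
  fixes G :: "'a graph" and k :: nat
  assumes "connected_graph G"
    and "card (verts G) \<ge> 2"
  shows "Rplus (iter_subdivision k G) =
      4 ^ k * Rplus G + (8 ^ k - 4 ^ k) * Rstar G
      + (8 ^ k - 2 ^ k) / 3 * real (card (edges G))
          * (2 * real (card (edges G)) - 2 * real (card (verts G)) + 1)
      - (4 ^ k - 1) / 3 * (real (card (edges G)) - real (card (verts G)))
          * (real (card (edges G)) - real (card (verts G)) + 1)"
proof -
  note c = assms(1)
  have ne: "verts G \<noteq> {}" using assms(2) by auto
  define m where "m = real (card (edges G))"
  define n where "n = real (card (verts G))"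
  define P where "P = Rplus G"
  define Q where "Q = Rstar G"
  define c' where "c' = 2 * m - 2 * n + 1"
  define q where "q = (m - n) * (m - n + 1)"
  have main: "inv k (iter_subdivision k G)
     \<and> real (card (edges (iter_subdivision k G))) = (2^k) * m
     \<and> real (card (verts (iter_subdivision k G))) = n + ((2^k) - 1) * m
     \<and> Rplus (iter_subdivision k G) = ((2::real)^k)^2 * P + (((2::real)^k)^3 - ((2::real)^k)^2) * Q
          + (((2::real)^k)^3 - (2::real)^k) / 3 * m * c' - (((2::real)^k)^2 - 1) / 3 * q
     \<and> Rstar (iter_subdivision k G) = ((2::real)^k)^3 * Q + (((2::real)^k)^3 - (2::real)^k) / 3 * m * c'"
  proof (induction k)
    case 0
    show ?case
      using inv_lift[OF c ne] card_verts_lift[of G] card_edges_lift[of G] Rplus_lift[OF c] Rstar_lift[OF c]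
      by (simp add: iter_subdivision_def m_def n_def P_def Q_def)
  next
    case (Suc k)
    define Hk where "Hk = iter_subdivision k G"
    have it: "iter_subdivision (Suc k) G = subdivision Hk" by (simp add: iter_subdivision_def Hk_def)
    define x where "x = (2::real)^k"
    have IH: "inv k Hk" "real (card (edges Hk)) = x * m" "real (card (verts Hk)) = n + (x - 1) * m"
      "Rplus Hk = x^2 * P + (x^3 - x^2) * Q + (x^3 - x) / 3 * m * c' - (x^2 - 1) / 3 * q"
      "Rstar Hk = x^3 * Q + (x^3 - x) / 3 * m * c'"
      using Suc.IH unfolding Hk_def x_def by auto
    note st = step[OF IH(1)]
    have x2: "(2::real)^Suc k = 2 * x" by (simp add: x_def)
    show ?case unfolding it x2
    proof (intro conjI)
      show "inv (Suc k) (subdivision Hk)" by (rule st(1))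
      show "real (card (edges (subdivision Hk))) = 2 * x * m" using st(3) IH(2) by simp
      show "real (card (verts (subdivision Hk))) = n + (2 * x - 1) * m" using st(2) IH(2,3) by (simp add: algebra_simps)
      show "Rplus (subdivision Hk) = (2 * x)^2 * P + ((2 * x)^3 - (2 * x)^2) * Q
          + ((2 * x)^3 - 2 * x) / 3 * m * c' - ((2 * x)^2 - 1) / 3 * q"
        unfolding st(4) IH(2,3,4,5) c'_def q_def by (rule alg(1))
      show "Rstar (subdivision Hk) = (2 * x)^3 * Q + ((2 * x)^3 - 2 * x) / 3 * m * c'"
        unfolding st(5) IH(2,3,5) c'_def by (rule alg(2))
    qed
  qed
  have p4: "(4::real)^k = ((2::real)^k)^2" by (simp add: power2_eq_square power_mult_distrib[symmetric])
  have p8: "(8::real)^k = ((2::real)^k)^3" by (simp add: power3_eq_cube power_mult_distrib[symmetric])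
  show ?thesis using main unfolding p4 p8
    by (simp add: m_def n_def P_def Q_def c'_def q_def)
qed


end
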